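(* Every Markov shift $X$ is Borel isomorphic to a Borel system of the form $W\sqcup\bigsqcup_{n\in\mathbb N}\Sigma(L_n)$, where $W$ is weakly wandering (an invariant Borel subsystem consisting of a weakly wandering set) and each $L_n$ is a loop graph, $\Sigma(L_n)$ denoting the corresponding Markov shift.
   Context: A Markov shift $\Sigma(G)$ is the left shift on the set of bi-infinite edge paths in a directed graph $G$ with countably (possibly finitely) many vertices and edges, with the product of discrete topologies; it is a Borel system (standard Borel space with a Borel automorphism). A Borel isomorphism of Borel systems is a Borel bijection with Borel inverse intertwining the actions. In a Borel system $(X,T)$, a Borel set $W$ is wandering if the sets $T^kW$, $k\in\mathbb Z$, are pairwise disjoint; a set is weakly wandering if it is a Borel subset of a countable union of wandering sets. A loop graph is a directed graph consisting of simple loops all based at a common vertex and otherwise pairwise non-intersecting; the associated Markov shift is a loop system. *)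

theory Defs
  imports "HOL-Analysis.Analysis" "Graph_Theory.Digraph"
begin

text \<open>Directed graphs with countably (possibly finitely) many vertices and edges:
  vertices and edges are labelled by natural numbers; multiple edges and loops allowed.\<close>
type_synonym graph = "(nat, nat) pre_digraph"

definition markov_shift :: "graph \<Rightarrow> (int \<Rightarrow> nat) set" where
  "markov_shift G = {x. \<forall>i. x i \<in> arcs G \<and> head G (x i) = tail G (x (i + 1))}"

definition shift :: "(int \<Rightarrow> nat) \<Rightarrow> (int \<Rightarrow> nat)" where
  "shift x = (\<lambda>i. x (i + 1))"

definition shift_pow :: "int \<Rightarrow> (int \<Rightarrow> nat) \<Rightarrow> (int \<Rightarrow> nat)" where
  "shift_pow k x = (\<lambda>i. x (i + k))"

text \<open>Borel structure: Borel sets of the product of discrete topologies (the topology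
  on int => nat is the product topology, nat carries the discrete topology),
  restricted to the given subset.\<close>
definition borel_on :: "(int \<Rightarrow> nat) set \<Rightarrow> (int \<Rightarrow> nat) measure" where
  "borel_on S = restrict_space borel S"

definition wandering :: "graph \<Rightarrow> (int \<Rightarrow> nat) set \<Rightarrow> bool" where
  "wandering G A \<longleftrightarrow> A \<in> sets (borel_on (markov_shift G)) \<and>
     (\<forall>k l. k \<noteq> l \<longrightarrow> shift_pow k ` A \<inter> shift_pow l ` A = {})"

definition weakly_wandering :: "graph \<Rightarrow> (int \<Rightarrow> nat) set \<Rightarrow> bool" where
  "weakly_wandering G A \<longleftrightarrow> A \<in> sets (borel_on (markov_shift G)) \<and>
     (\<exists>Ws :: nat \<Rightarrow> (int \<Rightarrow> nat) set. (\<forall>k. wandering G (Ws k)) \<and> A \<subseteq> (\<Union>k. Ws k))"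

definition borel_iso :: "(int \<Rightarrow> nat) set \<Rightarrow> (int \<Rightarrow> nat) set \<Rightarrow> bool" where
  "borel_iso S S' \<longleftrightarrow> (\<exists>f g.
     bij_betw f S S' \<and>
     f \<in> borel_on S \<rightarrow>\<^sub>M borel_on S' \<and>
     g \<in> borel_on S' \<rightarrow>\<^sub>M borel_on S \<and>
     (\<forall>x\<in>S. g (f x) = x) \<and> (\<forall>y\<in>S'. f (g y) = y) \<and>
     (\<forall>x\<in>S. f (shift x) = shift (f x)))"

definition inner_verts :: "graph \<Rightarrow> nat list \<Rightarrow> nat list" where
  "inner_verts G c = map (head G) (butlast c)"

definition is_simple_loop :: "graph \<Rightarrow> nat \<Rightarrow> nat list \<Rightarrow> bool" where
  "is_simple_loop G v c \<longleftrightarrow> c \<noteq> [] \<and> set c \<subseteq> arcs G \<and>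
     tail G (hd c) = v \<and> head G (last c) = v \<and>
     (\<forall>i. Suc i < length c \<longrightarrow> head G (c ! i) = tail G (c ! Suc i)) \<and>
     distinct (inner_verts G c) \<and> v \<notin> set (inner_verts G c)"

definition loop_graph :: "graph \<Rightarrow> bool" where
  "loop_graph G \<longleftrightarrow> wf_digraph G \<and> (\<exists>v C. v \<in> verts G \<and>
     (\<forall>c\<in>C. is_simple_loop G v c) \<and>
     arcs G = (\<Union>c\<in>C. set c) \<and>
     verts G = insert v (\<Union>c\<in>C. set (inner_verts G c)) \<and>
     (\<forall>c\<in>C. \<forall>d\<in>C. c \<noteq> d \<longrightarrow>
        set c \<inter> set d = {} \<and> set (inner_verts G c) \<inter> set (inner_verts G d) = {}))"

end

theory Submission
  imports Defs
begin


lemma coord_meas[measurable]: "(\<lambda>x::int\<Rightarrow>nat. x i) \<in> measurable borel (count_space UNIV)"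
proof -
  have "(\<lambda>x::int\<Rightarrow>nat. x i) \<in> borel_measurable borel"
    by (intro borel_measurable_continuous_onI continuous_on_product_coordinates)
  then show ?thesis using sets_borel_eq_count_space measurable_cong_sets by blast
qed

lemma fun_meas_coord:
  fixes f :: "'a \<Rightarrow> int \<Rightarrow> nat"
  assumes "\<And>i. (\<lambda>x. f x i) \<in> measurable M (count_space UNIV)"
  shows "f \<in> measurable M borel"
proof -
  have "(\<lambda>x. f x i) \<in> borel_measurable M" for i
    using assms[of i] sets_borel_eq_count_space measurable_cong_sets by blast
  then show ?thesis by (rule measurable_coordinatewise_then_product)
qed



lemma shift_pow_add: "shift_pow a (shift_pow b x) = shift_pow (a + b) x"
  by (auto simp: shift_pow_def add_ac)
lemma shift_pow_0[simp]: "shift_pow 0 x = x"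
  by (simp add: shift_pow_def)
lemma shift_eq: "shift x = shift_pow 1 x"
  by (simp add: shift_def shift_pow_def)
lemma shift_pow_app: "shift_pow k x i = x (i + k)"
  by (simp add: shift_pow_def)

lemma shift_pow_meas: "shift_pow k \<in> measurable borel borel"
  by (rule fun_meas_coord) (simp add: shift_pow_def coord_meas)

lemma shift_pow_image: "shift_pow k ` S = shift_pow (-k) -` S"
proof
  show "shift_pow k ` S \<subseteq> shift_pow (- k) -` S" by (auto simp: shift_pow_add)
  show "shift_pow (- k) -` S \<subseteq> shift_pow k ` S"
  proof
    fix x assume "x \<in> shift_pow (- k) -` S"
    then have "shift_pow (-k) x \<in> S" by simp
    moreover have "x = shift_pow k (shift_pow (-k) x)" by (simp add: shift_pow_add)
    ultimately show "x \<in> shift_pow k ` S" by blast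
  qed
qed

lemma shift_pow_image_borel: "S \<in> sets borel \<Longrightarrow> shift_pow k ` S \<in> sets borel"
  unfolding shift_pow_image using measurable_sets[OF shift_pow_meas[of "-k"]] by simp

lemma inv_shift_image:
  assumes "\<And>k x. x \<in> S \<Longrightarrow> shift_pow k x \<in> S"
  shows "shift ` S = S"
proof
  show "shift ` S \<subseteq> S" using assms by (auto simp: shift_eq)
  show "S \<subseteq> shift ` S"
  proof
    fix x assume "x \<in> S"
    then have "shift_pow (-1) x \<in> S" by (rule assms)
    moreover have "x = shift (shift_pow (-1) x)" by (simp add: shift_eq shift_pow_add)
    ultimately show "x \<in> shift ` S" by blast
  qed
qed

lemma markov_shift_pow: "x \<in> markov_shift G \<Longrightarrow> shift_pow k x \<in> markov_shift G"
  unfolding markov_shift_def shift_pow_def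
proof safe
  fix i assume "\<forall>i. x i \<in> arcs G \<and> head G (x i) = tail G (x (i + 1))"
  then have "x (i+k) \<in> arcs G \<and> head G (x (i+k)) = tail G (x (i + k + 1))" by blast
  then show "x (i+k) \<in> arcs G" "head G (x (i+k)) = tail G (x (i + 1 + k))" by (simp_all add: add_ac)
qed

lemma markov_borel: "markov_shift G \<in> sets borel"
proof -
  have "markov_shift G = {x. \<forall>i. x i \<in> arcs G \<and> head G (x i) = tail G (x (i + 1))}"
    by (simp add: markov_shift_def)
  also have "\<dots> \<in> sets borel" by measurable
  finally show ?thesis .
qed

lemma borel_on_sets: "S \<in> sets borel \<Longrightarrow> S \<subseteq> markov_shift G \<Longrightarrow> S \<in> sets (borel_on (markov_shift G))"
  unfolding borel_on_def using markov_borel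
  by (subst sets_restrict_space_iff) auto

definition Rset :: "graph \<Rightarrow> nat \<Rightarrow> (int \<Rightarrow> nat) set" where
  "Rset G n = {x \<in> markov_shift G. (\<forall>i. n \<le> tail G (x i)) \<and> (\<forall>i. \<exists>j>i. tail G (x j) = n)
      \<and> (\<forall>i. \<exists>j<i. tail G (x j) = n)}"

lemma Rset_borel: "Rset G n \<in> sets borel"
proof -
  have "Rset G n = markov_shift G \<inter> {x. (\<forall>i. n \<le> tail G (x i)) \<and> (\<forall>i. \<exists>j>i. tail G (x j) = n)
      \<and> (\<forall>i. \<exists>j<i. tail G (x j) = n)}" by (auto simp: Rset_def)
  also have "\<dots> \<in> sets borel" by (rule sets.Int[OF markov_borel]) measurable
  finally show ?thesis .
qed

lemma Rset_shift: "x \<in> Rset G n \<Longrightarrow> shift_pow k x \<in> Rset G n"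
  unfolding Rset_def
proof (safe)
  assume x: "x \<in> markov_shift G" "\<forall>i. n \<le> tail G (x i)" "\<forall>i. \<exists>j>i. tail G (x j) = n"
    "\<forall>i. \<exists>j<i. tail G (x j) = n"
  show "shift_pow k x \<in> markov_shift G" using x(1) by (rule markov_shift_pow)
  show "n \<le> tail G (shift_pow k x i)" for i using x(2) by (simp add: shift_pow_def)
  show "\<exists>j>i. tail G (shift_pow k x j) = n" for i
  proof -
    obtain j where "j > i + k" "tail G (x j) = n" using x(3) by blast
    then show ?thesis by (intro exI[of _ "j - k"]) (auto simp: shift_pow_def)
  qed
  show "\<exists>j<i. tail G (shift_pow k x j) = n" for i
  proof -
    obtain j where "j < i + k" "tail G (x j) = n" using x(4) by blast
    then show ?thesis by (intro exI[of _ "j - k"]) (auto simp: shift_pow_def)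
  qed
qed

lemma Rset_disj: "n \<noteq> m \<Longrightarrow> Rset G n \<inter> Rset G m = {}"
proof (rule ccontr)
  assume "n \<noteq> m" "Rset G n \<inter> Rset G m \<noteq> {}"
  then obtain x where x: "x \<in> Rset G n" "x \<in> Rset G m" by blast
  obtain i where i: "tail G (x i) = n" using x(1) unfolding Rset_def by blast
  obtain j where j: "tail G (x j) = m" using x(2) unfolding Rset_def by blast
  have "m \<le> n" using x(2) i unfolding Rset_def by blast
  moreover have "n \<le> m" using x(1) j unfolding Rset_def by blast
  ultimately show False using \<open>n \<noteq> m\<close> by simp
qed



definition Aset :: "graph \<Rightarrow> nat \<Rightarrow> (int \<Rightarrow> nat) set" where
  "Aset G n = {x \<in> markov_shift G. tail G (x 0) = n \<and> (\<forall>i>0. tail G (x i) \<noteq> n)}"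
definition Bset :: "graph \<Rightarrow> nat \<Rightarrow> (int \<Rightarrow> nat) set" where
  "Bset G n = {x \<in> markov_shift G. tail G (x 0) = n \<and> (\<forall>i<0. tail G (x i) \<noteq> n)}"

lemma Aset_borel: "Aset G n \<in> sets borel"
proof -
  have "Aset G n = markov_shift G \<inter> {x. tail G (x 0) = n \<and> (\<forall>i>0. tail G (x i) \<noteq> n)}"
    by (auto simp: Aset_def)
  also have "\<dots> \<in> sets borel" by (rule sets.Int[OF markov_borel]) measurable
  finally show ?thesis .
qed
lemma Bset_borel: "Bset G n \<in> sets borel"
proof -
  have "Bset G n = markov_shift G \<inter> {x. tail G (x 0) = n \<and> (\<forall>i<0. tail G (x i) \<noteq> n)}"
    by (auto simp: Bset_def)
  also have "\<dots> \<in> sets borel" by (rule sets.Int[OF markov_borel]) measurable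
  finally show ?thesis .
qed

lemma Aset_wand:
  assumes "a \<in> Aset G n" "b \<in> Aset G n" "shift_pow k a = shift_pow l b" "k \<noteq> l"
  shows False
proof -
  have e: "a (i + k) = b (i + l)" for i using fun_cong[OF assms(3), of i] by (simp add: shift_pow_def)
  show False
  proof (cases "k < l")
    case True
    from e[of "-k"] have "a 0 = b (l - k)" by simp
    then show False using assms(1,2) True unfolding Aset_def by auto
  next
    case False
    then have "l < k" using assms(4) by simp
    from e[of "-l"] have "a (k - l) = b 0" by simp
    then have "tail G (a (k - l)) = n" using assms(2) unfolding Aset_def by simp
    moreover have "k - l > 0" using \<open>l < k\<close> by simp
    ultimately show False using assms(1) unfolding Aset_def by blast
  qed
qed

lemma Bset_wand:
  assumes "a \<in> Bset G n" "b \<in> Bset G n" "shift_pow k a = shift_pow l b" "k \<noteq> l"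
  shows False
proof -
  have e: "a (i + k) = b (i + l)" for i using fun_cong[OF assms(3), of i] by (simp add: shift_pow_def)
  show False
  proof (cases "k < l")
    case True
    from e[of "-l"] have "a (k - l) = b 0" by simp
    then have "tail G (a (k - l)) = n" using assms(2) unfolding Bset_def by simp
    moreover have "k - l < 0" using True by simp
    ultimately show False using assms(1) unfolding Bset_def by blast
  next
    case False
    then have "l < k" using assms(4) by simp
    from e[of "-k"] have "a 0 = b (l - k)" by simp
    then show False using assms(1,2) \<open>l < k\<close> unfolding Bset_def by auto
  qed
qed

lemma wand_shift:
  assumes "\<And>a b k l. a \<in> S \<Longrightarrow> b \<in> S \<Longrightarrow> shift_pow k a = shift_pow l b \<Longrightarrow> k \<noteq> l \<Longrightarrow> False"
  shows "\<forall>k l. k \<noteq> l \<longrightarrow> shift_pow k ` (shift_pow t ` S) \<inter> shift_pow l ` (shift_pow t ` S) = {}"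
proof (intro allI impI)
  fix k l :: int assume "k \<noteq> l"
  show "shift_pow k ` (shift_pow t ` S) \<inter> shift_pow l ` (shift_pow t ` S) = {}"
  proof (rule ccontr)
    assume "\<not> ?thesis"
    then obtain a b where ab: "a \<in> S" "b \<in> S" "shift_pow k (shift_pow t a) = shift_pow l (shift_pow t b)"
      by blast
    then have "shift_pow (k + t) a = shift_pow (l + t) b" by (simp add: shift_pow_add)
    then show False using assms[OF ab(1,2)] \<open>k \<noteq> l\<close> by (metis add_right_cancel)
  qed
qed

lemma markov_image_sub: "S \<subseteq> markov_shift G \<Longrightarrow> shift_pow t ` S \<subseteq> markov_shift G"
  using markov_shift_pow by blast

lemma coverage:
  assumes x: "x \<in> markov_shift G" "\<forall>n. x \<notin> Rset G n"
  shows "\<exists>n t b. x \<in> shift_pow t ` (if b then Aset G n else Bset G n)"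
proof -
  define n where "n = (LEAST n. \<exists>i. tail G (x i) = n)"
  have ex: "\<exists>i. tail G (x i) = n" unfolding n_def by (rule LeastI_ex) blast
  then obtain t0 where t0: "tail G (x t0) = n" by blast
  have ge: "n \<le> tail G (x i)" for i unfolding n_def by (rule Least_le) blast
  have "x \<notin> Rset G n" using x by blast
  then have "(\<exists>i0. \<forall>j>i0. tail G (x j) \<noteq> n) \<or> (\<exists>i0. \<forall>j<i0. tail G (x j) \<noteq> n)"
    using x(1) ge unfolding Rset_def by blast
  then show ?thesis
  proof
    assume "\<exists>i0. \<forall>j>i0. tail G (x j) \<noteq> n"
    then obtain i0 where i0: "\<forall>j>i0. tail G (x j) \<noteq> n" by blast
    have "t0 \<le> i0" using i0 t0 not_less by blast
    define d where "d = (LEAST d::nat. tail G (x (i0 - int d)) = n)"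
    have Pd: "tail G (x (i0 - int d)) = n" unfolding d_def
      by (rule LeastI[of _ "nat (i0 - t0)"]) (use t0 \<open>t0 \<le> i0\<close> in auto)
    define t where "t = i0 - int d"
    have after: "tail G (x j) \<noteq> n" if "j > t" for j
    proof (cases "j > i0")
      case True then show ?thesis using i0 by blast
    next
      case False
      then have "nat (i0 - j) < d" using that unfolding t_def by auto
      then have "tail G (x (i0 - int (nat (i0 - j)))) \<noteq> n" unfolding d_def by (rule not_less_Least)
      then show ?thesis using False by simp
    qed
    have "shift_pow t x \<in> Aset G n"
      unfolding Aset_def using markov_shift_pow[OF x(1)] Pd after
      by (auto simp: shift_pow_def t_def)
    moreover have "x = shift_pow (-t) (shift_pow t x)" by (simp add: shift_pow_add)
    ultimately have "x \<in> shift_pow (-t) ` (if True then Aset G n else Bset G n)" by simp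
    then show ?thesis by blast
  next
    assume "\<exists>i0. \<forall>j<i0. tail G (x j) \<noteq> n"
    then obtain i0 where i0: "\<forall>j<i0. tail G (x j) \<noteq> n" by blast
    have "i0 \<le> t0" using i0 t0 not_less by blast
    define d where "d = (LEAST d::nat. tail G (x (i0 + int d)) = n)"
    have Pd: "tail G (x (i0 + int d)) = n" unfolding d_def
      by (rule LeastI[of _ "nat (t0 - i0)"]) (use t0 \<open>i0 \<le> t0\<close> in auto)
    define t where "t = i0 + int d"
    have before: "tail G (x j) \<noteq> n" if "j < t" for j
    proof (cases "j < i0")
      case True then show ?thesis using i0 by blast
    next
      case False
      then have "nat (j - i0) < d" using that unfolding t_def by auto
      then have "tail G (x (i0 + int (nat (j - i0)))) \<noteq> n" unfolding d_def by (rule not_less_Least)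
      then show ?thesis using False by simp
    qed
    have "shift_pow t x \<in> Bset G n"
      unfolding Bset_def using markov_shift_pow[OF x(1)] Pd before
      by (auto simp: shift_pow_def t_def)
    moreover have "x = shift_pow (-t) (shift_pow t x)" by (simp add: shift_pow_add)
    ultimately have "x \<in> shift_pow (-t) ` (if False then Aset G n else Bset G n)" by simp
    then show ?thesis by blast
  qed
qed

definition Wset :: "graph \<Rightarrow> (int \<Rightarrow> nat) set" where
  "Wset G = markov_shift G - (\<Union>n. Rset G n)"

lemma Wset_borel: "Wset G \<in> sets borel"
  unfolding Wset_def
  by (rule sets.Diff[OF markov_borel]) (rule sets.countable_UN, use Rset_borel in blast)

lemma Wset_ww: "weakly_wandering G (Wset G)"
  unfolding weakly_wandering_def
proof (intro conjI)
  show "Wset G \<in> sets (borel_on (markov_shift G))"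
    using Wset_borel by (rule borel_on_sets) (auto simp: Wset_def)
  define Ws where "Ws m = (case (from_nat m :: nat \<times> int \<times> bool) of (n, k, b) \<Rightarrow>
      shift_pow k ` (if b then Aset G n else Bset G n))" for m
  have "wandering G (Ws m)" for m
  proof -
    obtain n k b where nkb: "(from_nat m :: nat \<times> int \<times> bool) = (n, k, b)" by (cases "from_nat m :: nat \<times> int \<times> bool") blast
    define S where "S = (if b then Aset G n else Bset G n)"
    have W: "Ws m = shift_pow k ` S" unfolding Ws_def S_def nkb by simp
    have Sb: "S \<in> sets borel" unfolding S_def using Aset_borel Bset_borel by simp
    have Ss: "S \<subseteq> markov_shift G" unfolding S_def Aset_def Bset_def by auto
    have Sw: False if "a \<in> S" "c \<in> S" "shift_pow k a = shift_pow l c" "k \<noteq> l" for a c k l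
    proof (cases b)
      case True
      then have "a \<in> Aset G n" "c \<in> Aset G n" using that(1,2) unfolding S_def by simp_all
      then show False using Aset_wand that(3,4) by blast
    next
      case False
      then have "a \<in> Bset G n" "c \<in> Bset G n" using that(1,2) unfolding S_def by simp_all
      then show False using Bset_wand that(3,4) by blast
    qed
    show ?thesis unfolding wandering_def W
      using borel_on_sets[OF shift_pow_image_borel[OF Sb] markov_image_sub[OF Ss]] wand_shift[OF Sw]
      by (intro conjI)
  qed
  moreover have "Wset G \<subseteq> (\<Union>m. Ws m)"
  proof
    fix x assume "x \<in> Wset G"
    then obtain n t b where "x \<in> shift_pow t ` (if b then Aset G n else Bset G n)"
      using coverage[of x G] unfolding Wset_def by blast
    then have "x \<in> Ws (to_nat (n, t, b))" unfolding Ws_def by simp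
    then show "x \<in> (\<Union>m. Ws m)" by blast
  qed
  ultimately have "(\<forall>k. wandering G (Ws k)) \<and> Wset G \<subseteq> (\<Union>k. Ws k)" by blast
  then show "\<exists>Ws :: nat \<Rightarrow> (int \<Rightarrow> nat) set. (\<forall>k::nat. wandering G (Ws k)) \<and> Wset G \<subseteq> (\<Union>k. Ws k)" by blast
qed

lemma Wset_shift: "shift ` Wset G = Wset G"
proof (rule inv_shift_image)
  fix k x assume x: "x \<in> Wset G"
  show "shift_pow k x \<in> Wset G" unfolding Wset_def
  proof
    show "shift_pow k x \<in> markov_shift G" using x markov_shift_pow unfolding Wset_def by blast
    show "shift_pow k x \<notin> (\<Union>n. Rset G n)"
    proof
      assume "shift_pow k x \<in> (\<Union>n. Rset G n)"
      then obtain n where "shift_pow k x \<in> Rset G n" by blast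
      then have "shift_pow (-k) (shift_pow k x) \<in> Rset G n" by (rule Rset_shift)
      then show False using x unfolding Wset_def by (simp add: shift_pow_add)
    qed
  qed
qed



definition ac :: "nat list \<Rightarrow> nat \<Rightarrow> nat" where "ac p j = prod_encode (list_encode p, j)"
definition dp :: "nat \<Rightarrow> nat list" where "dp c = list_decode (fst (prod_decode c))"
definition dj :: "nat \<Rightarrow> nat" where "dj c = snd (prod_decode c)"

lemma dp_ac[simp]: "dp (ac p j) = p" by (simp add: dp_def ac_def)
lemma dj_ac[simp]: "dj (ac p j) = j" by (simp add: dj_def ac_def)
lemma ac_dp_dj: "ac (dp c) (dj c) = c"
  by (simp add: ac_def dp_def dj_def)
lemma ac_inj[simp]: "ac p j = ac q k \<longleftrightarrow> p = q \<and> j = k"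
  by (metis dp_ac dj_ac)

definition loops :: "graph \<Rightarrow> nat \<Rightarrow> nat list set" where
  "loops G n = {p. p \<noteq> [] \<and> set p \<subseteq> arcs G \<and> tail G (hd p) = n \<and> head G (last p) = n \<and>
     (\<forall>i. Suc i < length p \<longrightarrow> head G (p!i) = tail G (p ! Suc i) \<and> head G (p!i) \<noteq> n) \<and>
     (\<forall>e\<in>set p. n \<le> tail G e)}"

definition LG :: "graph \<Rightarrow> nat \<Rightarrow> graph" where
  "LG G n = \<lparr>verts = insert 0 {Suc (ac p j) |p j. p \<in> loops G n \<and> Suc j < length p},
     arcs = {ac p j |p j. p \<in> loops G n \<and> j < length p},
     tail = (\<lambda>c. if dj c = 0 then 0 else Suc (ac (dp c) (dj c - 1))),
     head = (\<lambda>c. if Suc (dj c) = length (dp c) then 0 else Suc c)\<rparr>"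

lemma LG_simps:
  "verts (LG G n) = insert 0 {Suc (ac p j) |p j. p \<in> loops G n \<and> Suc j < length p}"
  "arcs (LG G n) = {ac p j |p j. p \<in> loops G n \<and> j < length p}"
  "tail (LG G n) c = (if dj c = 0 then 0 else Suc (ac (dp c) (dj c - 1)))"
  "head (LG G n) c = (if Suc (dj c) = length (dp c) then 0 else Suc c)"
  by (simp_all add: LG_def)

lemma LG_arcs_iff: "c \<in> arcs (LG G n) \<longleftrightarrow> dp c \<in> loops G n \<and> dj c < length (dp c)"
  unfolding LG_simps by (auto intro!: exI[of _ "dp c"] exI[of _ "dj c"] simp: ac_dp_dj)

lemma LG_tail_ac: "tail (LG G n) (ac p j) = (if j = 0 then 0 else Suc (ac p (j - 1)))"
  by (simp add: LG_simps)
lemma LG_head_ac: "head (LG G n) (ac p j) = (if Suc j = length p then 0 else Suc (ac p j))"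
  by (simp add: LG_simps)

definition cl :: "nat list \<Rightarrow> nat list" where "cl p = map (ac p) [0..<length p]"

lemma set_cl: "set (cl p) = {ac p j |j. j < length p}"
  by (auto simp: cl_def)

lemma inner_cl: "inner_verts (LG G n) (cl p) = map (\<lambda>j. Suc (ac p j)) [0..<length p - 1]"
proof -
  have "butlast (cl p) = map (ac p) [0..<length p - 1]"
    unfolding cl_def map_butlast[symmetric] by (cases "length p") (simp_all del: upt_Suc add: upt_Suc_append)
  moreover have "head (LG G n) (ac p j) = Suc (ac p j)" if "j < length p - 1" for j
    using that by (simp add: LG_head_ac)
  ultimately show ?thesis unfolding inner_verts_def by simp
qed

lemma LG_loop_graph: "loop_graph (LG G n)"
  unfolding loop_graph_def
proof (intro conjI exI[of _ 0] exI[of _ "cl ` loops G n"])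
  show "wf_digraph (LG G n)"
  proof
    fix e assume "e \<in> arcs (LG G n)"
    then obtain p j where e: "e = ac p j" "p \<in> loops G n" "j < length p" unfolding LG_simps by blast
    show "tail (LG G n) e \<in> verts (LG G n)"
      using e by (cases j) (auto simp: LG_tail_ac LG_simps)
    show "head (LG G n) e \<in> verts (LG G n)"
      using e by (auto simp: LG_head_ac LG_simps)
  qed
  show "0 \<in> verts (LG G n)" by (simp add: LG_simps)
  show "\<forall>c\<in>cl ` loops G n. is_simple_loop (LG G n) 0 c"
  proof
    fix c assume "c \<in> cl ` loops G n"
    then obtain p where c: "c = cl p" "p \<in> loops G n" by blast
    then have ne: "p \<noteq> []" unfolding loops_def by blast
    have dist: "distinct (map (\<lambda>j. Suc (ac p j)) [0..<length p - 1])"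
      by (simp add: distinct_map inj_on_def)
    show "is_simple_loop (LG G n) 0 c"
      unfolding is_simple_loop_def c(1) inner_cl
    proof (intro conjI)
      show "cl p \<noteq> []" using ne by (simp add: cl_def)
      show "set (cl p) \<subseteq> arcs (LG G n)" using c(2) by (auto simp: cl_def LG_simps)
      show "tail (LG G n) (hd (cl p)) = 0" using ne by (simp add: cl_def hd_map LG_tail_ac)
      show "head (LG G n) (last (cl p)) = 0" using ne
        by (simp add: cl_def last_map LG_head_ac)
      show "\<forall>i. Suc i < length (cl p) \<longrightarrow> head (LG G n) (cl p ! i) = tail (LG G n) (cl p ! Suc i)"
        by (simp add: cl_def LG_head_ac LG_tail_ac)
      show "distinct (map (\<lambda>j. Suc (ac p j)) [0..<length p - 1])" by (rule dist)
      show "0 \<notin> set (map (\<lambda>j. Suc (ac p j)) [0..<length p - 1])" by auto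
    qed
  qed
  show "arcs (LG G n) = (\<Union>c\<in>cl ` loops G n. set c)"
    by (auto simp: LG_simps cl_def)
  show "verts (LG G n) = insert 0 (\<Union>c\<in>cl ` loops G n. set (inner_verts (LG G n) c))"
    by (auto simp: LG_simps inner_cl)
  show "\<forall>c\<in>cl ` loops G n. \<forall>d\<in>cl ` loops G n. c \<noteq> d \<longrightarrow>
        set c \<inter> set d = {} \<and> set (inner_verts (LG G n) c) \<inter> set (inner_verts (LG G n) d) = {}"
    by (auto simp: inner_cl set_cl)
qed



definition Fb :: "graph \<Rightarrow> nat \<Rightarrow> (int \<Rightarrow> nat) \<Rightarrow> nat" where
  "Fb G n z = (LEAST d::nat. tail G (z (- int d)) = n)"
definition Ff :: "graph \<Rightarrow> nat \<Rightarrow> (int \<Rightarrow> nat) \<Rightarrow> nat" where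
  "Ff G n z = (LEAST d::nat. 0 < d \<and> tail G (z (int d)) = n)"
definition Floop :: "graph \<Rightarrow> nat \<Rightarrow> (int \<Rightarrow> nat) \<Rightarrow> nat list" where
  "Floop G n z = map (\<lambda>k. z (int k - int (Fb G n z))) [0..<Fb G n z + Ff G n z]"
definition FF :: "graph \<Rightarrow> nat \<Rightarrow> (int \<Rightarrow> nat) \<Rightarrow> nat" where
  "FF G n z = ac (Floop G n z) (Fb G n z)"
definition fmap :: "graph \<Rightarrow> nat \<Rightarrow> (int \<Rightarrow> nat) \<Rightarrow> (int \<Rightarrow> nat)" where
  "fmap G n x = (\<lambda>i. FF G n (shift_pow i x))"
definition gmap :: "(int \<Rightarrow> nat) \<Rightarrow> (int \<Rightarrow> nat)" where
  "gmap y = (\<lambda>i. dp (y i) ! dj (y i))"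

lemma sp_neg: "shift_pow i x (- int d) = x (i - int d)" by (simp add: shift_pow_def)
lemma sp_pos: "shift_pow i x (int d) = x (i + int d)" by (simp add: shift_pow_def add.commute)

lemma Fb_char:
  assumes "tail G (x (i - int b)) = n" "\<And>d. d < b \<Longrightarrow> tail G (x (i - int d)) \<noteq> n"
  shows "Fb G n (shift_pow i x) = b"
  unfolding Fb_def sp_neg
  by (rule Least_equality) (use assms not_less in auto)

lemma Ff_char:
  assumes "0 < f" "tail G (x (i + int f)) = n" "\<And>d. 0 < d \<Longrightarrow> d < f \<Longrightarrow> tail G (x (i + int d)) \<noteq> n"
  shows "Ff G n (shift_pow i x) = f"
  unfolding Ff_def sp_pos
  by (rule Least_equality) (use assms not_less in auto)

section \<open>Structure of the loop shift\<close>

lemma ms_arc: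
  assumes "y \<in> markov_shift (LG G n)"
  shows "dp (y i) \<in> loops G n" "dj (y i) < length (dp (y i))"
  using assms unfolding markov_shift_def LG_arcs_iff by blast+

lemma ms_hd:
  assumes "y \<in> markov_shift (LG G n)"
  shows "head (LG G n) (y i) = tail (LG G n) (y (i + 1))"
  using assms unfolding markov_shift_def by blast

lemma ms_next:
  assumes y: "y \<in> markov_shift (LG G n)" and j: "Suc (dj (y i)) < length (dp (y i))"
  shows "y (i + 1) = ac (dp (y i)) (Suc (dj (y i)))"
proof -
  have h: "head (LG G n) (y i) = tail (LG G n) (y (i + 1))" by (rule ms_hd[OF y])
  have "head (LG G n) (y i) = Suc (y i)" using j by (simp add: LG_simps)
  with h have nz: "dj (y (i+1)) \<noteq> 0" and e: "ac (dp (y (i+1))) (dj (y (i+1)) - 1) = y i"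
    by (auto simp: LG_simps split: if_splits)
  have e2: "ac (dp (y (i+1))) (dj (y (i+1)) - 1) = ac (dp (y i)) (dj (y i))"
    using e ac_dp_dj by metis
  then have "dp (y (i+1)) = dp (y i)" "dj (y (i+1)) - 1 = dj (y i)" using ac_inj by blast+
  with nz have "y (i+1) = ac (dp (y i)) (Suc (dj (y i)))"
    by (metis ac_dp_dj Suc_pred' neq0_conv)
  then show ?thesis .
qed

lemma ms_last:
  assumes y: "y \<in> markov_shift (LG G n)" and j: "Suc (dj (y i)) = length (dp (y i))"
  shows "dj (y (i + 1)) = 0"
proof -
  have h: "head (LG G n) (y i) = tail (LG G n) (y (i + 1))" by (rule ms_hd[OF y])
  have "head (LG G n) (y i) = 0" using j by (simp add: LG_simps)
  with h show ?thesis by (simp add: LG_simps split: if_splits)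
qed

lemma ms_prev:
  assumes y: "y \<in> markov_shift (LG G n)" and j: "0 < dj (y i)"
  shows "y (i - 1) = ac (dp (y i)) (dj (y i) - 1)"
proof -
  have h: "head (LG G n) (y (i - 1)) = tail (LG G n) (y i)" using ms_hd[OF y, of "i - 1"] by simp
  have t: "tail (LG G n) (y i) = Suc (ac (dp (y i)) (dj (y i) - 1))" using j by (simp add: LG_simps)
  have "head (LG G n) (y (i - 1)) = Suc (y (i - 1))"
    using h t by (simp add: LG_simps split: if_splits)
  with h t show ?thesis by simp
qed

lemma block_back:
  assumes y: "y \<in> markov_shift (LG G n)"
  shows "k \<le> dj (y i) \<Longrightarrow> y (i - int k) = ac (dp (y i)) (dj (y i) - k)"
proof (induction k)
  case 0 then show ?case by (simp add: ac_dp_dj)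
next
  case (Suc k)
  then have IH: "y (i - int k) = ac (dp (y i)) (dj (y i) - k)" by simp
  have "0 < dj (y (i - int k))" using IH Suc.prems by simp
  then have "y (i - int k - 1) = ac (dp (y (i - int k))) (dj (y (i - int k)) - 1)"
    by (rule ms_prev[OF y])
  then show ?case using IH by (simp add: algebra_simps)
qed

lemma block_fwd:
  assumes y: "y \<in> markov_shift (LG G n)"
  shows "dj (y i) + k < length (dp (y i)) \<Longrightarrow> y (i + int k) = ac (dp (y i)) (dj (y i) + k)"
proof (induction k)
  case 0 then show ?case by (simp add: ac_dp_dj)
next
  case (Suc k)
  then have IH: "y (i + int k) = ac (dp (y i)) (dj (y i) + k)" by simp
  have "Suc (dj (y (i + int k))) < length (dp (y (i + int k)))" using IH Suc.prems by simp
  then have "y (i + int k + 1) = ac (dp (y (i + int k))) (Suc (dj (y (i + int k))))"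
    by (rule ms_next[OF y])
  then show ?case using IH by (simp add: algebra_simps)
qed

lemma block_at:
  assumes y: "y \<in> markov_shift (LG G n)" and k: "k < length (dp (y i))"
  shows "y (i - int (dj (y i)) + int k) = ac (dp (y i)) k"
proof (cases "k \<le> dj (y i)")
  case True
  have e: "i - int (dj (y i)) + int k = i - int (dj (y i) - k)" using True by simp
  show ?thesis unfolding e using block_back[OF y True[unfolded le_diff_conv2[OF order.refl]]]
    block_back[OF y, of "dj (y i) - k" i] True by simp
next
  case False
  have e: "i - int (dj (y i)) + int k = i + int (k - dj (y i))" using False by simp
  show ?thesis unfolding e using block_fwd[OF y, of i "k - dj (y i)"] False k by simp
qed

lemma visit_g:
  assumes y: "y \<in> markov_shift (LG G n)"
  shows "tail G (gmap y t) = n \<longleftrightarrow> dj (y t) = 0"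
proof -
  define p where "p = dp (y t)"
  define j where "j = dj (y t)"
  have p: "p \<in> loops G n" "j < length p" using ms_arc[OF y, of t] unfolding p_def j_def by auto
  have g: "gmap y t = p ! j" unfolding gmap_def p_def j_def by simp
  show ?thesis
  proof (cases j)
    case 0
    then show ?thesis using p unfolding g j_def[symmetric] loops_def by (auto simp: hd_conv_nth)
  next
    case (Suc j')
    then have "head G (p ! j') = tail G (p ! Suc j')" "head G (p ! j') \<noteq> n"
      using p unfolding loops_def by auto
    then show ?thesis unfolding g j_def[symmetric] using Suc by simp
  qed
qed

lemma gmap_in:
  assumes y: "y \<in> markov_shift (LG G n)"
  shows "gmap y \<in> Rset G n"
  unfolding Rset_def
proof (intro CollectI conjI allI)
  have arc: "gmap y t \<in> arcs G" for t
    using ms_arc[OF y, of t] unfolding gmap_def loops_def by auto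
  have ch: "head G (gmap y t) = tail G (gmap y (t + 1))" for t
  proof -
    define p where "p = dp (y t)"
    define j where "j = dj (y t)"
    have p: "p \<in> loops G n" "j < length p" using ms_arc[OF y, of t] unfolding p_def j_def by auto
    show ?thesis
    proof (cases "Suc j < length p")
      case True
      then have "y (t + 1) = ac p (Suc j)" using ms_next[OF y, of t] unfolding p_def j_def by simp
      then show ?thesis using p True unfolding gmap_def loops_def p_def[symmetric] j_def[symmetric]
        by simp
    next
      case False
      then have l: "Suc j = length p" using p by simp
      then have "dj (y (t + 1)) = 0" using ms_last[OF y, of t] unfolding p_def j_def by simp
      then have "tail G (gmap y (t + 1)) = n" using visit_g[OF y] by simp
      moreover have "gmap y t = last p"
      proof -
        have "p \<noteq> []" using p(1) unfolding loops_def by blast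
        then show ?thesis using l unfolding gmap_def p_def[symmetric] j_def[symmetric]
          by (simp add: last_conv_nth flip: l)
      qed
      ultimately show ?thesis using p unfolding loops_def by simp
    qed
  qed
  show "gmap y \<in> markov_shift G" unfolding markov_shift_def using arc ch by blast
  show "n \<le> tail G (gmap y t)" for t
    using ms_arc[OF y, of t] unfolding gmap_def loops_def by auto
  show "\<exists>s>t. tail G (gmap y s) = n" for t
  proof -
    define p where "p = dp (y t)"
    define j where "j = dj (y t)"
    have p: "p \<in> loops G n" "j < length p" using ms_arc[OF y, of t] unfolding p_def j_def by auto
    have "y (t + int (length p - 1 - j)) = ac p (length p - 1)"
      using block_fwd[OF y, of t "length p - 1 - j"] p unfolding p_def j_def by simp
    then have "dj (y (t + int (length p - 1 - j) + 1)) = 0"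
      using ms_last[OF y, of "t + int (length p - 1 - j)"] p by simp
    then have "tail G (gmap y (t + int (length p - 1 - j) + 1)) = n" using visit_g[OF y] by simp
    then show ?thesis by (intro exI[of _ "t + int (length p - 1 - j) + 1"]) simp
  qed
  show "\<exists>s<t. tail G (gmap y s) = n" for t
  proof -
    define j where "j = dj (y (t - 1))"
    have "y (t - 1 - int j) = ac (dp (y (t - 1))) 0"
      using block_back[OF y, of j "t - 1"] unfolding j_def by simp
    then have "tail G (gmap y (t - 1 - int j)) = n" using visit_g[OF y] by simp
    then show ?thesis by (intro exI[of _ "t - 1 - int j"]) simp
  qed
qed

lemma fg:
  assumes y: "y \<in> markov_shift (LG G n)"
  shows "fmap G n (gmap y) = y"
proof
  fix i
  define x where "x = gmap y"
  define p where "p = dp (y i)"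
  define j where "j = dj (y i)"
  have p: "p \<in> loops G n" "j < length p" using ms_arc[OF y, of i] unfolding p_def j_def by auto
  have blk: "y (i - int j + int k) = ac p k" if "k < length p" for k
    using block_at[OF y, of k i] that unfolding p_def j_def by simp
  have b: "Fb G n (shift_pow i x) = j"
  proof (rule Fb_char)
    have "y (i - int j) = ac p 0" using blk[of 0] p by (cases p) auto
    then show "tail G (x (i - int j)) = n" using visit_g[OF y] unfolding x_def by simp
    fix d assume "d < j"
    then have "y (i - int j + int (j - d)) = ac p (j - d)" using blk[of "j - d"] p by simp
    moreover have "i - int j + int (j - d) = i - int d" using \<open>d < j\<close> by simp
    ultimately have "dj (y (i - int d)) \<noteq> 0" using \<open>d < j\<close> by simp
    then show "tail G (x (i - int d)) \<noteq> n" using visit_g[OF y] unfolding x_def by simp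
  qed
  have f: "Ff G n (shift_pow i x) = length p - j"
  proof (rule Ff_char)
    show "0 < length p - j" using p by simp
    have "y (i + int (length p - 1 - j)) = ac p (length p - 1)"
      using block_fwd[OF y, of i "length p - 1 - j"] p unfolding p_def j_def by simp
    then have "dj (y (i + int (length p - 1 - j) + 1)) = 0"
      using ms_last[OF y, of "i + int (length p - 1 - j)"] p by simp
    moreover have "i + int (length p - 1 - j) + 1 = i + int (length p - j)" using p by simp
    ultimately show "tail G (x (i + int (length p - j))) = n" using visit_g[OF y] unfolding x_def by simp
    fix d assume "0 < d" "d < length p - j"
    then have "y (i + int d) = ac p (j + d)" using block_fwd[OF y, of i d] unfolding p_def j_def by simp
    then have "dj (y (i + int d)) \<noteq> 0" using \<open>0 < d\<close> by simp
    then show "tail G (x (i + int d)) \<noteq> n" using visit_g[OF y] unfolding x_def by simp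
  qed
  have l: "Floop G n (shift_pow i x) = p"
  proof (rule nth_equalityI)
    show "length (Floop G n (shift_pow i x)) = length p" unfolding Floop_def b f using p by simp
    fix k assume "k < length (Floop G n (shift_pow i x))"
    then have k: "k < length p" unfolding Floop_def b f using p by simp
    have "Floop G n (shift_pow i x) ! k = x (i - int j + int k)"
      unfolding Floop_def b f using k p by (simp add: shift_pow_def algebra_simps)
    also have "\<dots> = p ! k" using blk[OF k] unfolding x_def gmap_def by simp
    finally show "Floop G n (shift_pow i x) ! k = p ! k" .
  qed
  show "fmap G n (gmap y) i = y i"
    unfolding fmap_def FF_def x_def[symmetric] l b p_def j_def by (simp add: ac_dp_dj)
qed



lemma Floop_eq: "Floop G n (shift_pow i x) =
   map (\<lambda>k. x (i - int (Fb G n (shift_pow i x)) + int k)) [0..<Fb G n (shift_pow i x) + Ff G n (shift_pow i x)]"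
  unfolding Floop_def by (simp add: shift_pow_def algebra_simps)

lemma Fb_props:
  assumes x: "x \<in> Rset G n"
  shows "tail G (x (i - int (Fb G n (shift_pow i x)))) = n"
    "\<And>d. d < Fb G n (shift_pow i x) \<Longrightarrow> tail G (x (i - int d)) \<noteq> n"
proof -
  obtain j where j: "j < i" "tail G (x j) = n" using x unfolding Rset_def by blast
  have P: "tail G (x (i - int (nat (i - j)))) = n" using j by simp
  show "tail G (x (i - int (Fb G n (shift_pow i x)))) = n"
    unfolding Fb_def sp_neg by (rule LeastI[of _ "nat (i - j)"]) (rule P)
  show "tail G (x (i - int d)) \<noteq> n" if "d < Fb G n (shift_pow i x)" for d
    using not_less_Least[OF that[unfolded Fb_def sp_neg]] .
qed

lemma Ff_props:
  assumes x: "x \<in> Rset G n"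
  shows "0 < Ff G n (shift_pow i x)" "tail G (x (i + int (Ff G n (shift_pow i x)))) = n"
    "\<And>d. 0 < d \<Longrightarrow> d < Ff G n (shift_pow i x) \<Longrightarrow> tail G (x (i + int d)) \<noteq> n"
proof -
  obtain j where j: "j > i" "tail G (x j) = n" using x unfolding Rset_def by blast
  have P: "0 < nat (j - i) \<and> tail G (x (i + int (nat (j - i)))) = n" using j by simp
  have L: "0 < Ff G n (shift_pow i x) \<and> tail G (x (i + int (Ff G n (shift_pow i x)))) = n"
    unfolding Ff_def sp_pos by (rule LeastI[of _ "nat (j - i)"]) (rule P)
  then show "0 < Ff G n (shift_pow i x)" "tail G (x (i + int (Ff G n (shift_pow i x)))) = n" by auto
  show "tail G (x (i + int d)) \<noteq> n" if "0 < d" "d < Ff G n (shift_pow i x)" for d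
    using not_less_Least[OF that(2)[unfolded Ff_def sp_pos]] that(1) by blast
qed

lemma Floop_in:
  assumes x: "x \<in> Rset G n"
  shows "Floop G n (shift_pow i x) \<in> loops G n"
proof -
  define b where "b = Fb G n (shift_pow i x)"
  define f where "f = Ff G n (shift_pow i x)"
  have b1: "tail G (x (i - int b)) = n" and b2: "\<And>d. d < b \<Longrightarrow> tail G (x (i - int d)) \<noteq> n"
    using Fb_props[OF x, where i=i] unfolding b_def by auto
  have f0: "0 < f" and f1: "tail G (x (i + int f)) = n"
    and f2: "\<And>d. 0 < d \<Longrightarrow> d < f \<Longrightarrow> tail G (x (i + int d)) \<noteq> n"
    using Ff_props[OF x, where i=i] unfolding f_def by auto
  have M: "x t \<in> arcs G" "head G (x t) = tail G (x (t + 1))" for t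
    using x unfolding Rset_def markov_shift_def by auto
  have ge: "n \<le> tail G (x t)" for t using x unfolding Rset_def by auto
  define q where "q = Floop G n (shift_pow i x)"
  have q: "q = map (\<lambda>k. x (i - int b + int k)) [0..<b + f]"
    unfolding q_def b_def f_def by (rule Floop_eq)
  have lq: "length q = b + f" unfolding q by simp
  have nq: "k < b + f \<Longrightarrow> q ! k = x (i - int b + int k)" for k unfolding q by simp
  have ne: "q \<noteq> []" using f0 lq by auto
  have notv: "tail G (x (i - int b + int (Suc k))) \<noteq> n" if "Suc k < b + f" for k
  proof (cases "Suc k \<le> b")
    case True
    then have e: "i - int b + int (Suc k) = i - int (b - Suc k)" by simp
    have "b - Suc k < b" using True by simp
    then show ?thesis unfolding e by (rule b2)
  next
    case False
    then have e: "i - int b + int (Suc k) = i + int (Suc k - b)" by simp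
    have "0 < Suc k - b" "Suc k - b < f" using False that by auto
    then show ?thesis unfolding e by (rule f2)
  qed
  have "q \<in> loops G n"
    unfolding loops_def
  proof (intro CollectI conjI allI impI ballI)
    show "q \<noteq> []" by (rule ne)
    show "set q \<subseteq> arcs G" unfolding q using M by auto
    show "tail G (hd q) = n" using ne f0 b1 by (simp add: hd_conv_nth nq)
    have "last q = x (i - int b + int (b + f - 1))" using ne f0 by (simp add: last_conv_nth nq lq)
    moreover have "i - int b + int (b + f - 1) + 1 = i + int f" using f0 by simp
    ultimately show "head G (last q) = n" using M(2)[of "i - int b + int (b + f - 1)"] f1 by simp
    fix k assume k: "Suc k < length q"
    have e: "i - int b + int k + 1 = i - int b + int (Suc k)" by simp
    show "head G (q ! k) = tail G (q ! Suc k)" using k M(2)[of "i - int b + int k"] e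
      by (simp add: nq lq)
    show "head G (q ! k) \<noteq> n" using k M(2)[of "i - int b + int k"] e notv[of k]
      by (simp add: nq lq)
  next
    fix e assume "e \<in> set q"
    then show "n \<le> tail G e" unfolding q using ge by auto
  qed
  then show ?thesis unfolding q_def .
qed

lemma gf:
  assumes x: "x \<in> Rset G n"
  shows "gmap (fmap G n x) = x"
proof
  fix i
  define b where "b = Fb G n (shift_pow i x)"
  define f where "f = Ff G n (shift_pow i x)"
  have f0: "0 < f" using Ff_props[OF x, where i=i] unfolding f_def by auto
  have "gmap (fmap G n x) i = Floop G n (shift_pow i x) ! b"
    unfolding gmap_def fmap_def FF_def b_def by simp
  also have "\<dots> = x (i - int b + int b)"
    unfolding Floop_eq b_def[symmetric] f_def[symmetric] using f0 by simp
  finally show "gmap (fmap G n x) i = x i" by simp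
qed

lemma fmap_in:
  assumes x: "x \<in> Rset G n"
  shows "fmap G n x \<in> markov_shift (LG G n)"
  unfolding markov_shift_def
proof (intro CollectI allI conjI)
  fix i
  define b where "b = Fb G n (shift_pow i x)"
  define f where "f = Ff G n (shift_pow i x)"
  define q where "q = Floop G n (shift_pow i x)"
  have b1: "tail G (x (i - int b)) = n" and b2: "\<And>d. d < b \<Longrightarrow> tail G (x (i - int d)) \<noteq> n"
    using Fb_props[OF x, where i=i] unfolding b_def by auto
  have f0: "0 < f" and f1: "tail G (x (i + int f)) = n"
    and f2: "\<And>d. 0 < d \<Longrightarrow> d < f \<Longrightarrow> tail G (x (i + int d)) \<noteq> n"
    using Ff_props[OF x, where i=i] unfolding f_def by auto
  have qin: "q \<in> loops G n" unfolding q_def using Floop_in[OF x] .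
  have lq: "length q = b + f" unfolding q_def Floop_def b_def f_def by simp
  have fi: "fmap G n x i = ac q b" unfolding fmap_def FF_def q_def b_def by simp
  show "fmap G n x i \<in> arcs (LG G n)" unfolding fi LG_simps using qin lq f0 by auto
  show "head (LG G n) (fmap G n x i) = tail (LG G n) (fmap G n x (i + 1))"
  proof (cases "f = 1")
    case True
    have "Fb G n (shift_pow (i + 1) x) = 0"
      by (rule Fb_char) (use f1 True in simp_all)
    then have "tail (LG G n) (fmap G n x (i + 1)) = 0"
      unfolding fmap_def FF_def by (simp add: LG_tail_ac)
    moreover have "head (LG G n) (fmap G n x i) = 0" unfolding fi LG_head_ac using lq True by simp
    ultimately show ?thesis by simp
  next
    case False
    then have f1': "1 < f" using f0 by simp
    have b': "Fb G n (shift_pow (i + 1) x) = Suc b"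
    proof (rule Fb_char)
      show "tail G (x (i + 1 - int (Suc b))) = n" using b1 by simp
      fix d assume d: "d < Suc b"
      show "tail G (x (i + 1 - int d)) \<noteq> n"
      proof (cases d)
        case 0 then show ?thesis using f2[of 1] f1' by simp
      next
        case (Suc d')
        then have "i + 1 - int d = i - int d'" by simp
        then show ?thesis using b2[of d'] d Suc by simp
      qed
    qed
    have f': "Ff G n (shift_pow (i + 1) x) = f - 1"
    proof (rule Ff_char)
      show "0 < f - 1" using f1' by simp
      have "i + 1 + int (f - 1) = i + int f" using f1' by simp
      then show "tail G (x (i + 1 + int (f - 1))) = n" using f1 by simp
      fix d assume d: "0 < d" "d < f - 1"
      have e: "i + 1 + int d = i + int (Suc d)" by simp
      show "tail G (x (i + 1 + int d)) \<noteq> n" unfolding e by (rule f2) (use d in auto)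
    qed
    have q': "Floop G n (shift_pow (i + 1) x) = q"
    proof -
      have "Floop G n (shift_pow (i + 1) x) = map (\<lambda>k. x (i + 1 - int (Suc b) + int k)) [0..<Suc b + (f - 1)]"
        unfolding Floop_eq b' f' ..
      also have "\<dots> = map (\<lambda>k. x (i - int b + int k)) [0..<b + f]" using f1' by simp
      also have "\<dots> = q" unfolding q_def b_def f_def by (rule Floop_eq[symmetric])
      finally show ?thesis .
    qed
    have "fmap G n x (i + 1) = ac q (Suc b)" unfolding fmap_def FF_def q' b' ..
    then show ?thesis unfolding fi using lq f1' by (simp add: LG_tail_ac LG_head_ac)
  qed
qed



lemma Fb_meas[measurable]: "Fb G n \<in> measurable borel (count_space UNIV)"
  unfolding Fb_def by measurable
lemma Ff_meas[measurable]: "Ff G n \<in> measurable borel (count_space UNIV)"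
  unfolding Ff_def by measurable


lemma FF_pre: "FF G n z = c \<longleftrightarrow> (Fb G n z = dj c \<and> Fb G n z + Ff G n z = length (dp c) \<and>
    (\<forall>k<length (dp c). z (int k - int (dj c)) = dp c ! k))"
proof -
  have "FF G n z = c \<longleftrightarrow> ac (Floop G n z) (Fb G n z) = ac (dp c) (dj c)"
    unfolding FF_def by (simp add: ac_dp_dj)
  also have "\<dots> \<longleftrightarrow> Floop G n z = dp c \<and> Fb G n z = dj c" by simp
  also have "\<dots> \<longleftrightarrow> (Fb G n z = dj c \<and> Fb G n z + Ff G n z = length (dp c) \<and>
    (\<forall>k<length (dp c). z (int k - int (dj c)) = dp c ! k))"
    unfolding list_eq_iff_nth_eq Floop_def by auto
  finally show ?thesis .
qed

lemma FF_meas: "FF G n \<in> measurable borel (count_space UNIV)"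
  unfolding measurable_count_space_eq2_countable
proof (intro conjI ballI)
  show "FF G n \<in> space borel \<rightarrow> UNIV" by simp
  fix c :: nat
  have "FF G n -` {c} \<inter> space borel = {z. Fb G n z = dj c \<and> Fb G n z + Ff G n z = length (dp c) \<and>
    (\<forall>k<length (dp c). z (int k - int (dj c)) = dp c ! k)}"
    unfolding set_eq_iff vimage_def by (simp add: FF_pre)
  also have "\<dots> \<in> sets borel" by measurable
  finally show "FF G n -` {c} \<inter> space borel \<in> sets borel" .
qed

lemma fmap_meas: "fmap G n \<in> measurable borel borel"
  unfolding fmap_def
  by (rule fun_meas_coord) (rule measurable_compose[OF shift_pow_meas FF_meas])

lemma gmap_meas: "gmap \<in> measurable borel borel"
  unfolding gmap_def
  by (rule fun_meas_coord) (rule measurable_compose[OF coord_meas measurable_count_space])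

lemma restr_meas:
  assumes "h \<in> measurable borel borel" "h ` S \<subseteq> S'"
  shows "h \<in> borel_on S \<rightarrow>\<^sub>M borel_on S'"
  unfolding borel_on_def
proof (rule measurable_restrict_space2)
  show "h \<in> space (restrict_space borel S) \<rightarrow> S'" using assms(2) by (auto simp: space_restrict_space)
  show "h \<in> restrict_space borel S \<rightarrow>\<^sub>M borel" using assms(1) by (rule measurable_restrict_space1)
qed

lemma Rset_iso: "borel_iso (Rset G n) (markov_shift (LG G n))"
proof -
  have 1: "bij_betw (fmap G n) (Rset G n) (markov_shift (LG G n))"
    by (rule bij_betw_byWitness[where f'=gmap]) (auto simp: gf fg fmap_in gmap_in)
  have 2: "fmap G n \<in> borel_on (Rset G n) \<rightarrow>\<^sub>M borel_on (markov_shift (LG G n))"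
    by (rule restr_meas[OF fmap_meas]) (auto simp: fmap_in)
  have 3: "gmap \<in> borel_on (markov_shift (LG G n)) \<rightarrow>\<^sub>M borel_on (Rset G n)"
    by (rule restr_meas[OF gmap_meas]) (auto simp: gmap_in)
  have 4: "\<forall>x\<in>Rset G n. gmap (fmap G n x) = x" using gf by blast
  have 5: "\<forall>y\<in>markov_shift (LG G n). fmap G n (gmap y) = y" using fg by blast
  have 6: "\<forall>x\<in>Rset G n. fmap G n (shift x) = shift (fmap G n x)"
    unfolding fmap_def by (auto simp: shift_eq shift_pow_add shift_pow_def add_ac)
  show ?thesis unfolding borel_iso_def using 1 2 3 4 5 6 by blast
qed



theorem lemma3p6:
  fixes G :: graph
  assumes "wf_digraph G"
  shows "\<exists>(W :: (int \<Rightarrow> nat) set) (Xs :: nat \<Rightarrow> (int \<Rightarrow> nat) set) (L :: nat \<Rightarrow> graph).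
     markov_shift G = W \<union> (\<Union>n. Xs n) \<and>
     (\<forall>n. W \<inter> Xs n = {}) \<and> disjoint_family Xs \<and>
     shift ` W = W \<and> weakly_wandering G W \<and>
     (\<forall>n. Xs n \<in> sets (borel_on (markov_shift G)) \<and> shift ` Xs n = Xs n) \<and>
     (\<forall>n. loop_graph (L n) \<and> borel_iso (Xs n) (markov_shift (L n)))"
proof (intro exI[of _ "Wset G"] exI[of _ "Rset G"] exI[of _ "LG G"] conjI allI)
  have sub: "Rset G n \<subseteq> markov_shift G" for n unfolding Rset_def by blast
  show "markov_shift G = Wset G \<union> (\<Union>n. Rset G n)" using sub unfolding Wset_def by blast
  show "Wset G \<inter> Rset G n = {}" for n unfolding Wset_def by blast
  show "disjoint_family (Rset G)" unfolding disjoint_family_on_def using Rset_disj by blast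
  show "shift ` Wset G = Wset G" by (rule Wset_shift)
  show "weakly_wandering G (Wset G)" by (rule Wset_ww)
  show "Rset G n \<in> sets (borel_on (markov_shift G))" for n
    using borel_on_sets[OF Rset_borel sub] .
  show "shift ` Rset G n = Rset G n" for n by (rule inv_shift_image) (rule Rset_shift)
  show "loop_graph (LG G n)" for n by (rule LG_loop_graph)
  show "borel_iso (Rset G n) (markov_shift (LG G n))" for n by (rule Rset_iso)
qed

end
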